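(* In the setting described in the context, assume the following stable recovery property holds: there exist $C>0$ and $\delta>0$ such that for any $\mathcal{S}\in\mathfrak{M}$, any $\overline{\mathbf{h}}\in\mathbb{R}^{S\times K}_{\mathcal{S}}$, any $X=\mathcal{A}P(\overline{\mathbf{h}})+e$ with $\|e\|\le\delta$, and any $\mathcal{S}^*\in\mathfrak{M}$ and $\mathbf{h}^*\in\mathbb{R}^{S\times K}_{\mathcal{S}^*}$ such that $\|\mathcal{A}P(\mathbf{h}^* )-X\|\le\|e\|$, we have $$d_2([\mathbf{h}^*],[\overline{\mathbf{h}}])\le C\min\left(\|P(\overline{\mathbf{h}})\|_\infty^{\frac1K-1},\|P(\mathbf{h}^* )\|_\infty^{\frac1K-1}\right)\|e\|.$$ Then $\mathcal{A}$ satisfies the Deep-$\mathfrak{M}$-Null Space Property with constants $$\gamma=C\,S^{\frac{K-1}{2}}\sqrt{K}\,\sigma_{max}\qquad\text{and}\qquad\rho=\delta,$$ where $\sigma_{max}$ is the spectral radius of $\mathcal{A}$ (its largest singular value, so that $\|\mathcal{A}T\|\le\sigma_{max}\|T\|$ for all $T$).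
   Context: Let $K,S\ge 1$ and $m_1,\dots,m_{K+1}$ be positive integers, $\mathbb{N}_S=\{1,\dots,S\}$, and for $k=1,\dots,K$ let $M_k:\mathbb{R}^S\to\mathbb{R}^{m_k\times m_{k+1}}$ be linear. Parameters are $\mathbf{h}=(\mathbf{h}_1,\dots,\mathbf{h}_K)\in\mathbb{R}^{S\times K}$, $\mathbf{h}_k\in\mathbb{R}^S$ with entries $\mathbf{h}_{k,i}$. $\mathbb{R}^{S^K}$ is the space of real order-$K$ tensors with all axes of size $S$, indexed by $\mathbf{i}\in\mathbb{N}_S^K$; $\|\cdot\|$ is the Euclidean norm and $\|\cdot\|_p$ the entrywise $\ell^p$ norm. Segre embedding: $P(\mathbf{h})_{\mathbf{i}}=\mathbf{h}_{1,\mathbf{i}_1}\cdots\mathbf{h}_{K,\mathbf{i}_K}$. The lifting operator $\mathcal{A}:\mathbb{R}^{S^K}\to\mathbb{R}^{m_1\times m_{K+1}}$ is the unique linear map with $\mathcal{A}P(\mathbf{h})=M_1(\mathbf{h}_1)\cdots M_K(\mathbf{h}_K)$ for all $\mathbf{h}$; matrices carry the Frobenius norm. A support is $\mathcal{S}=(\mathcal{S}_1,\dots,\mathcal{S}_K)$, $\mathcal{S}_k\subset\mathbb{N}_S$; unions are componentwise; $\mathbf{i}\in\mathcal{S}$ means $\mathbf{i}_k\in\mathcal{S}_k$ for all $k$. $\mathbb{R}^{S\times K}_{\mathcal{S}}=\{\mathbf{h}:\mathbf{h}_{k,i}=0\text{ whenever }i\notin\mathcal{S}_k\}$, $\mathbb{T}_{\mathcal{S}}=\{T: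 T_{\mathbf{i}}=0\text{ whenever }\mathbf{i}\notin\mathcal{S}\}$, $P_{\mathcal{S}}$ the orthogonal projection onto $\mathbb{T}_{\mathcal{S}}$, $\mathcal{A}_{\mathcal{S}}=\mathcal{A}P_{\mathcal{S}}$. $\mathfrak{M}$ is a given finite family of supports. Deep-$\mathfrak{M}$-Null Space Property with constants $(\gamma,\rho)$, $\gamma\ge1,\rho>0$: for all $\mathcal{S},\mathcal{S}'\in\mathfrak{M}$, every $T\in P(\mathbb{R}^{S\times K}_{\mathcal{S}})+P(\mathbb{R}^{S\times K}_{\mathcal{S}'})$ with $\|\mathcal{A}_{\mathcal{S}\cup\mathcal{S}'}T\|\le\rho$ and every $T'\in\ker\mathcal{A}_{\mathcal{S}\cup\mathcal{S}'}$ satisfy $\|T\|\le\gamma\|T-P_{\mathcal{S}\cup\mathcal{S}'}T'\|$. Metric $d_p$: let $\mathbb{R}^{S\times K}_*=\{\mathbf{h}:\mathbf{h}_k\ne0\ \forall k\}$; $\mathbf{h}\sim\mathbf{g}$ iff there are $\lambda_1,\dots,\lambda_K$ with $\prod_k\lambda_k=1$ and $\mathbf{h}_k=\lambda_k\mathbf{g}_k$ for all $k$; $[\mathbf{h}]$ is the class of $\mathbf{h}$. With $\mathbb{R}^{S\times K}_{diag}=\{\mathbf{h}\in\mathbb{R}^{S\times K}_*:\|\mathbf{h}_k\|_\infty=\|\mathbf{h}_1\|_\infty\ \forall k\}$, $d_p([\mathbf{h}],[\mathbf{g}])=\inf\{\|\mathbf{h}'-\mathbf{g}'\|_p:\mathbf{h}'\in[\mathbf{h}]\cap\mathbb{R}^{S\times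 K}_{diag},\ \mathbf{g}'\in[\mathbf{g}]\cap\mathbb{R}^{S\times K}_{diag}\}$ for $\mathbf{h},\mathbf{g}\in\mathbb{R}^{S\times K}_*$. *)

theory Defs
  imports Complex_Main "HOL-Library.FuncSet"
begin

(* Conventions (0-based): factor index k \<in> {0..<K}, coordinate index i \<in> {0..<S},
   matrix dimensions m 0, ..., m K (paper: m_1,...,m_{K+1}).
   Parameters h \<in> R^{S\<times>K}: h k i, zero outside k<K, i<S.
   Tensors in R^{S^K}: functions on multi-indices (nat \<Rightarrow> nat), zero outside
   the index set idx S K = Pi\<^sub>E {..<K} (\<lambda>_. {..<S}). *)

type_synonym vec = "nat \<Rightarrow> real"
type_synonym param = "nat \<Rightarrow> nat \<Rightarrow> real"
type_synonym tensor = "(nat \<Rightarrow> nat) \<Rightarrow> real"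
type_synonym mat = "nat \<Rightarrow> nat \<Rightarrow> real"
type_synonym support = "nat \<Rightarrow> nat set"

definition vecs :: "nat \<Rightarrow> vec set" where
  "vecs S = {v. \<forall>i. i \<ge> S \<longrightarrow> v i = 0}"

definition params :: "nat \<Rightarrow> nat \<Rightarrow> param set" where
  "params S K = {h. \<forall>k i. (k \<ge> K \<or> i \<ge> S) \<longrightarrow> h k i = 0}"

definition idx :: "nat \<Rightarrow> nat \<Rightarrow> (nat \<Rightarrow> nat) set" where
  "idx S K = Pi\<^sub>E {..<K} (\<lambda>_. {..<S})"

definition tensors :: "nat \<Rightarrow> nat \<Rightarrow> tensor set" where
  "tensors S K = {T. \<forall>i. i \<notin> idx S K \<longrightarrow> T i = 0}"

definition mats :: "nat \<Rightarrow> nat \<Rightarrow> mat set" where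
  "mats a b = {X. \<forall>r c. \<not> (r < a \<and> c < b) \<longrightarrow> X r c = 0}"

definition matmul :: "nat \<Rightarrow> nat \<Rightarrow> nat \<Rightarrow> mat \<Rightarrow> mat \<Rightarrow> mat" where
  "matmul a n b X Y = (\<lambda>r c. if r < a \<and> c < b then (\<Sum>l<n. X r l * Y l c) else 0)"

fun mchain :: "(nat \<Rightarrow> nat) \<Rightarrow> (nat \<Rightarrow> mat) \<Rightarrow> nat \<Rightarrow> mat" where
  "mchain m F 0 = (\<lambda>r c. if r = c \<and> r < m 0 then 1 else 0)"
| "mchain m F (Suc k) = matmul (m 0) (m k) (m (Suc k)) (mchain m F k) (F k)"

definition segre :: "nat \<Rightarrow> nat \<Rightarrow> param \<Rightarrow> tensor" where
  "segre S K h = (\<lambda>i. if i \<in> idx S K then (\<Prod>k<K. h k (i k)) else 0)"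

definition tnorm :: "nat \<Rightarrow> nat \<Rightarrow> tensor \<Rightarrow> real" where
  "tnorm S K T = sqrt (\<Sum>i\<in>idx S K. (T i)\<^sup>2)"

definition fro :: "nat \<Rightarrow> nat \<Rightarrow> mat \<Rightarrow> real" where
  "fro a b X = sqrt (\<Sum>r<a. \<Sum>c<b. (X r c)\<^sup>2)"

definition tinf :: "nat \<Rightarrow> nat \<Rightarrow> tensor \<Rightarrow> real" where
  "tinf S K T = Max ((\<lambda>i. \<bar>T i\<bar>) ` idx S K)"

definition madd :: "mat \<Rightarrow> mat \<Rightarrow> mat" where
  "madd X Y = (\<lambda>r c. X r c + Y r c)"

definition msub :: "mat \<Rightarrow> mat \<Rightarrow> mat" where
  "msub X Y = (\<lambda>r c. X r c - Y r c)"

definition is_lifting ::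
  "nat \<Rightarrow> nat \<Rightarrow> (nat \<Rightarrow> nat) \<Rightarrow> (nat \<Rightarrow> vec \<Rightarrow> mat) \<Rightarrow> (tensor \<Rightarrow> mat) \<Rightarrow> bool" where
  "is_lifting S K m M A \<longleftrightarrow>
     (\<forall>T\<in>tensors S K. A T \<in> mats (m 0) (m K))
   \<and> (\<forall>T\<in>tensors S K. \<forall>T'\<in>tensors S K. \<forall>a b::real.
        A (\<lambda>i. a * T i + b * T' i) = (\<lambda>r c. a * A T r c + b * A T' r c))
   \<and> (\<forall>h\<in>params S K. A (segre S K h) = mchain m (\<lambda>k. M k (h k)) K)"

definition linear_factors :: "nat \<Rightarrow> nat \<Rightarrow> (nat \<Rightarrow> nat) \<Rightarrow> (nat \<Rightarrow> vec \<Rightarrow> mat) \<Rightarrow> bool" where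
  "linear_factors S K m M \<longleftrightarrow> (\<forall>k<K.
      (\<forall>v\<in>vecs S. M k v \<in> mats (m k) (m (Suc k)))
    \<and> (\<forall>v\<in>vecs S. \<forall>w\<in>vecs S. \<forall>a b::real.
        M k (\<lambda>i. a * v i + b * w i) = (\<lambda>r c. a * M k v r c + b * M k w r c)))"

definition sunion :: "support \<Rightarrow> support \<Rightarrow> support" where
  "sunion Sp Sp' = (\<lambda>k. Sp k \<union> Sp' k)"

definition in_supp :: "nat \<Rightarrow> (nat \<Rightarrow> nat) \<Rightarrow> support \<Rightarrow> bool" where
  "in_supp K i Sp \<longleftrightarrow> (\<forall>k<K. i k \<in> Sp k)"

definition params_S :: "nat \<Rightarrow> nat \<Rightarrow> support \<Rightarrow> param set" where
  "params_S S K Sp = {h\<in>params S K. \<forall>k<K. \<forall>i. i \<notin> Sp k \<longrightarrow> h k i = 0}"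

definition proj :: "nat \<Rightarrow> nat \<Rightarrow> support \<Rightarrow> tensor \<Rightarrow> tensor" where
  "proj S K Sp T = (\<lambda>i. if in_supp K i Sp then T i else 0)"

definition segre_sum :: "nat \<Rightarrow> nat \<Rightarrow> support \<Rightarrow> support \<Rightarrow> tensor set" where
  "segre_sum S K Sp Sp' =
     {(\<lambda>i. segre S K h i + segre S K g i) | h g. h \<in> params_S S K Sp \<and> g \<in> params_S S K Sp'}"

definition deep_NSP ::
  "nat \<Rightarrow> nat \<Rightarrow> (nat \<Rightarrow> nat) \<Rightarrow> (tensor \<Rightarrow> mat) \<Rightarrow> support set \<Rightarrow> real \<Rightarrow> real \<Rightarrow> bool" where
  "deep_NSP S K m A MM \<gamma> \<rho> \<longleftrightarrow>
    (\<forall>Sp\<in>MM. \<forall>Sp'\<in>MM. \<forall>T T'.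
       T \<in> segre_sum S K Sp Sp'
     \<and> fro (m 0) (m K) (A (proj S K (sunion Sp Sp') T)) \<le> \<rho>
     \<and> T' \<in> tensors S K
     \<and> A (proj S K (sunion Sp Sp') T') = (\<lambda>_ _. 0)
     \<longrightarrow> tnorm S K T \<le> \<gamma> * tnorm S K (\<lambda>i. T i - proj S K (sunion Sp Sp') T' i))"

definition params_star :: "nat \<Rightarrow> nat \<Rightarrow> param set" where
  "params_star S K = {h\<in>params S K. \<forall>k<K. \<exists>i<S. h k i \<noteq> 0}"

definition equiv_param :: "nat \<Rightarrow> param \<Rightarrow> param \<Rightarrow> bool" where
  "equiv_param K h g \<longleftrightarrow>
     (\<exists>lam::nat \<Rightarrow> real. (\<Prod>k<K. lam k) = 1 \<and> (\<forall>k<K. \<forall>i. h k i = lam k * g k i))"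

definition vinf :: "nat \<Rightarrow> vec \<Rightarrow> real" where
  "vinf S v = Max ((\<lambda>i. \<bar>v i\<bar>) ` {..<S})"

definition params_diag :: "nat \<Rightarrow> nat \<Rightarrow> param set" where
  "params_diag S K = {h\<in>params_star S K. \<forall>k<K. vinf S (h k) = vinf S (h 0)}"

definition pnorm2 :: "nat \<Rightarrow> nat \<Rightarrow> param \<Rightarrow> real" where
  "pnorm2 S K h = sqrt (\<Sum>k<K. \<Sum>i<S. (h k i)\<^sup>2)"

definition d2 :: "nat \<Rightarrow> nat \<Rightarrow> param \<Rightarrow> param \<Rightarrow> real" where
  "d2 S K h g = Inf {pnorm2 S K (\<lambda>k i. h' k i - g' k i) | h' g'.
      h' \<in> params_diag S K \<and> equiv_param K h' h \<and>
      g' \<in> params_diag S K \<and> equiv_param K g' g}"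

definition sigma_max :: "nat \<Rightarrow> nat \<Rightarrow> (nat \<Rightarrow> nat) \<Rightarrow> (tensor \<Rightarrow> mat) \<Rightarrow> real" where
  "sigma_max S K m A = Sup {fro (m 0) (m K) (A T) | T. T \<in> tensors S K \<and> tnorm S K T \<le> 1}"

end

theory Submission
  imports Defs "HOL-Analysis.L2_Norm"
begin


lemma sqrt_prod: "finite A \<Longrightarrow> sqrt (\<Prod>x\<in>A. f x) = (\<Prod>x\<in>A. sqrt (f x))"
  by (induction A rule: finite_induct) (auto simp: real_sqrt_mult)

lemma tnorm_L2: "tnorm S K T = L2_set T (idx S K)"
  by (simp add: tnorm_def L2_set_def)

lemma finite_idx[simp]: "finite (idx S K)"
  by (simp add: idx_def finite_PiE)

lemma sum_sq_prod:
  fixes f :: "nat \<Rightarrow> nat \<Rightarrow> real"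
  shows "(\<Sum>i\<in>idx S K. (\<Prod>k<K. f k (i k))\<^sup>2) = (\<Prod>k<K. \<Sum>s<S. (f k s)\<^sup>2)"
proof -
  have "(\<Prod>k<K. \<Sum>s<S. (f k s)\<^sup>2) = (\<Sum>i\<in>idx S K. \<Prod>k<K. (f k (i k))\<^sup>2)"
    unfolding idx_def by (rule prod_sum_PiE[where f="\<lambda>k s. (f k s)\<^sup>2"]) auto
  then show ?thesis by (simp add: prod_power_distrib)
qed

lemma L2_prod_tensor:
  "L2_set (\<lambda>i. \<Prod>k<K. f k (i k)) (idx S K) = (\<Prod>k<K. L2_set (f k) {..<S})"
  unfolding L2_set_def by (simp add: sum_sq_prod sqrt_prod)

lemma L2_set_sum_ineq:
  "finite J \<Longrightarrow> L2_set (\<lambda>i. \<Sum>j\<in>J. f j i) A \<le> (\<Sum>j\<in>J. L2_set (f j) A)"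
proof (induction J rule: finite_induct)
  case empty
  then show ?case by (simp add: L2_set_def)
next
  case (insert x F)
  have "L2_set (\<lambda>i. \<Sum>j\<in>insert x F. f j i) A = L2_set (\<lambda>i. f x i + (\<Sum>j\<in>F. f j i)) A"
    using insert by simp
  also have "\<dots> \<le> L2_set (f x) A + L2_set (\<lambda>i. \<Sum>j\<in>F. f j i) A"
    by (rule L2_set_triangle_ineq)
  also have "\<dots> \<le> L2_set (f x) A + (\<Sum>j\<in>F. L2_set (f j) A)" using insert by simp
  finally show ?case using insert by simp
qed



definition Fk :: "param \<Rightarrow> param \<Rightarrow> nat \<Rightarrow> nat \<Rightarrow> vec" where
  "Fk h g k j = (if j < k then g j else if j = k then (\<lambda>s. h k s - g k s) else h j)"

lemma tele:
  fixes h g :: param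
  shows "(\<Prod>k<K. h k (i k)) - (\<Prod>k<K. g k (i k)) = (\<Sum>k<K. \<Prod>j<K. Fk h g k j (i j))"
proof -
  define Q where "Q n = (\<Prod>j<n. g j (i j)) * (\<Prod>j\<in>{n..<K}. h j (i j))" for n
  have Q0: "Q 0 = (\<Prod>k<K. h k (i k))" by (simp add: Q_def atLeast0LessThan)
  have QK: "Q K = (\<Prod>k<K. g k (i k))" by (simp add: Q_def)
  have step: "Q k - Q (Suc k) = (\<Prod>j<K. Fk h g k j (i j))" if "k < K" for k
  proof -
    have "(\<Prod>j<K. Fk h g k j (i j)) = (\<Prod>j\<in>{0..<k}. Fk h g k j (i j)) * (\<Prod>j\<in>{k..<K}. Fk h g k j (i j))"
      using that prod.atLeastLessThan_concat[of 0 k K "\<lambda>j. Fk h g k j (i j)"]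
      by (simp add: atLeast0LessThan)
    also have "(\<Prod>j\<in>{0..<k}. Fk h g k j (i j)) = (\<Prod>j<k. g j (i j))"
      by (simp add: atLeast0LessThan Fk_def)
    also have "(\<Prod>j\<in>{k..<K}. Fk h g k j (i j)) = (h k (i k) - g k (i k)) * (\<Prod>j\<in>{Suc k..<K}. h j (i j))"
      using that by (simp add: prod.atLeast_Suc_lessThan Fk_def)
    finally have 1: "(\<Prod>j<K. Fk h g k j (i j)) = (\<Prod>j<k. g j (i j)) * ((h k (i k) - g k (i k)) * (\<Prod>j\<in>{Suc k..<K}. h j (i j)))" .
    have 2: "Q k = (\<Prod>j<k. g j (i j)) * (h k (i k) * (\<Prod>j\<in>{Suc k..<K}. h j (i j)))"
      using that by (simp add: Q_def prod.atLeast_Suc_lessThan)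
    have 3: "Q (Suc k) = (\<Prod>j<k. g j (i j)) * (g k (i k) * (\<Prod>j\<in>{Suc k..<K}. h j (i j)))"
      by (simp add: Q_def)
    show ?thesis unfolding 1 2 3 by (simp add: algebra_simps)
  qed
  have "(\<Sum>k<K. \<Prod>j<K. Fk h g k j (i j)) = (\<Sum>k<K. Q k - Q (Suc k))"
    by (rule sum.cong) (auto simp: step)
  also have "\<dots> = Q 0 - Q K" by (rule sum_lessThan_telescope')
  finally show ?thesis using Q0 QK by simp
qed



lemma L2_bound:
  assumes "\<And>s. s < S \<Longrightarrow> \<bar>f s\<bar> \<le> c" "c \<ge> 0"
  shows "L2_set f {..<S} \<le> sqrt (real S) * c"
proof -
  have "(\<Sum>s<S. (f s)\<^sup>2) \<le> (\<Sum>s<S. c\<^sup>2)"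
  proof (rule sum_mono)
    fix s assume "s \<in> {..<S}"
    then have "\<bar>f s\<bar> \<le> c" using assms by auto
    then show "(f s)\<^sup>2 \<le> c\<^sup>2"
      by (metis abs_ge_zero power2_abs power_mono)
  qed
  also have "\<dots> = real S * c\<^sup>2" by simp
  finally have "sqrt (\<Sum>s<S. (f s)\<^sup>2) \<le> sqrt (real S * c\<^sup>2)" by (rule real_sqrt_le_mono)
  also have "\<dots> = sqrt (real S) * c" using assms(2) by (simp add: real_sqrt_mult)
  finally show ?thesis by (simp add: L2_set_def)
qed

lemma sum_L2_le:
  fixes d :: "nat \<Rightarrow> nat \<Rightarrow> real"
  shows "(\<Sum>k<K. L2_set (d k) {..<S}) \<le> sqrt (real K) * sqrt (\<Sum>k<K. \<Sum>i<S. (d k i)\<^sup>2)"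
proof -
  have "(\<Sum>k<K. L2_set (d k) {..<S}) = (\<Sum>k<K. \<bar>L2_set (d k) {..<S}\<bar> * \<bar>1::real\<bar>)" by simp
  also have "\<dots> \<le> L2_set (\<lambda>k. L2_set (d k) {..<S}) {..<K} * L2_set (\<lambda>_. 1) {..<K}"
    by (rule L2_set_mult_ineq)
  also have "L2_set (\<lambda>_. 1::real) {..<K} = sqrt (real K)" by (simp add: L2_set_constant)
  also have "L2_set (\<lambda>k. L2_set (d k) {..<S}) {..<K} = sqrt (\<Sum>k<K. \<Sum>i<S. (d k i)\<^sup>2)"
    unfolding L2_set_def by (simp add: sum_nonneg)
  finally show ?thesis by (simp add: mult.commute)
qed

lemma segre_diff_bound:
  fixes h g :: param
  assumes c: "c \<ge> 0" and bh: "\<And>k s. k < K \<Longrightarrow> s < S \<Longrightarrow> \<bar>h k s\<bar> \<le> c"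
    and bg: "\<And>k s. k < K \<Longrightarrow> s < S \<Longrightarrow> \<bar>g k s\<bar> \<le> c"
  shows "tnorm S K (\<lambda>i. segre S K h i - segre S K g i)
     \<le> (sqrt (real S) * c) ^ (K - 1) * sqrt (real K) * pnorm2 S K (\<lambda>k i. h k i - g k i)"
proof -
  let ?B = "(sqrt (real S) * c) ^ (K - 1)"
  have "tnorm S K (\<lambda>i. segre S K h i - segre S K g i)
      = L2_set (\<lambda>i. \<Sum>k<K. \<Prod>j<K. Fk h g k j (i j)) (idx S K)"
    unfolding tnorm_L2 by (rule L2_set_cong) (auto simp: segre_def tele)
  also have "\<dots> \<le> (\<Sum>k<K. L2_set (\<lambda>i. \<Prod>j<K. Fk h g k j (i j)) (idx S K))"
    by (rule L2_set_sum_ineq) simp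
  also have "\<dots> = (\<Sum>k<K. \<Prod>j<K. L2_set (Fk h g k j) {..<S})"
    by (simp add: L2_prod_tensor)
  also have "\<dots> \<le> (\<Sum>k<K. L2_set (\<lambda>s. h k s - g k s) {..<S} * ?B)"
  proof (rule sum_mono)
    fix k assume k: "k \<in> {..<K}"
    have "(\<Prod>j<K. L2_set (Fk h g k j) {..<S})
       = L2_set (Fk h g k k) {..<S} * (\<Prod>j\<in>{..<K} - {k}. L2_set (Fk h g k j) {..<S})"
      using k by (simp add: prod.remove)
    also have "(\<Prod>j\<in>{..<K} - {k}. L2_set (Fk h g k j) {..<S}) \<le> (\<Prod>j\<in>{..<K} - {k}. sqrt (real S) * c)"
    proof (rule prod_mono)
      fix j assume j: "j \<in> {..<K} - {k}"
      show "0 \<le> L2_set (Fk h g k j) {..<S} \<and> L2_set (Fk h g k j) {..<S} \<le> sqrt (real S) * c"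
        using j c bh bg by (auto simp: Fk_def intro!: L2_bound)
    qed
    also have "(\<Prod>j\<in>{..<K} - {k}. sqrt (real S) * c) = ?B"
      using k by (simp add: card_Diff_singleton)
    finally show "(\<Prod>j<K. L2_set (Fk h g k j) {..<S}) \<le> L2_set (\<lambda>s. h k s - g k s) {..<S} * ?B"
      by (simp add: Fk_def mult_left_mono)
  qed
  also have "\<dots> = ?B * (\<Sum>k<K. L2_set (\<lambda>s. h k s - g k s) {..<S})"
    by (simp add: sum_distrib_left mult.commute)
  also have "\<dots> \<le> ?B * (sqrt (real K) * pnorm2 S K (\<lambda>k i. h k i - g k i))"
    unfolding pnorm2_def using c
    by (intro mult_left_mono sum_L2_le[where d="\<lambda>k s. h k s - g k s"]) auto
  finally show ?thesis by (simp add: mult.assoc)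
qed



lemma vinf_ge: "s < S \<Longrightarrow> \<bar>v s\<bar> \<le> vinf S v"
  unfolding vinf_def by (rule Max_ge) auto

lemma vinf_in: "S \<ge> 1 \<Longrightarrow> \<exists>s<S. \<bar>v s\<bar> = vinf S v"
proof -
  assume "S \<ge> 1"
  then have "vinf S v \<in> (\<lambda>i. \<bar>v i\<bar>) ` {..<S}"
    unfolding vinf_def by (intro Max_in) (auto simp: lessThan_empty_iff)
  then show ?thesis by auto
qed

lemma vinf_scale:
  assumes "S \<ge> 1"
  shows "vinf S (\<lambda>i. l * v i) = \<bar>l\<bar> * vinf S v"
proof -
  obtain s where s: "s < S" "\<bar>v s\<bar> = vinf S v" using vinf_in assms by blast
  show ?thesis unfolding vinf_def
  proof (rule Max_eqI)
    fix y assume "y \<in> (\<lambda>i. \<bar>l * v i\<bar>) ` {..<S}"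
    then obtain i where "i < S" "y = \<bar>l * v i\<bar>" by auto
    then show "y \<le> \<bar>l\<bar> * Max ((\<lambda>i. \<bar>v i\<bar>) ` {..<S})"
      using vinf_ge[of i S v] by (auto simp: vinf_def abs_mult intro: mult_left_mono)
  next
    show "\<bar>l\<bar> * Max ((\<lambda>i. \<bar>v i\<bar>) ` {..<S}) \<in> (\<lambda>i. \<bar>l * v i\<bar>) ` {..<S}"
      using s by (auto simp: vinf_def abs_mult intro!: image_eqI[where x=s])
  qed simp
qed

lemma vinf_nonneg: "S \<ge> 1 \<Longrightarrow> vinf S v \<ge> 0"
  using vinf_ge[of 0 S v] by simp

lemma segre_equiv:
  assumes "equiv_param K h' h"
  shows "segre S K h' = segre S K h"
proof -
  obtain lam where l: "(\<Prod>k<K. lam k) = 1" "\<forall>k<K. \<forall>i. h' k i = lam k * h k i"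
    using assms unfolding equiv_param_def by blast
  show ?thesis
  proof
    fix i
    have "(\<Prod>k<K. h' k (i k)) = (\<Prod>k<K. lam k * h k (i k))"
      using l(2) by (intro prod.cong) auto
    also have "\<dots> = (\<Prod>k<K. h k (i k))" using l(1) by (simp add: prod.distrib)
    finally show "segre S K h' i = segre S K h i" by (simp add: segre_def)
  qed
qed

lemma tinf_lower:
  assumes "S \<ge> 1"
  shows "(\<Prod>k<K. vinf S (h k)) \<le> tinf S K (segre S K h)"
proof -
  define i where "i = (\<lambda>k. if k < K then (SOME s. s < S \<and> \<bar>h k s\<bar> = vinf S (h k)) else undefined)"
  have ik: "i k < S \<and> \<bar>h k (i k)\<bar> = vinf S (h k)" if "k < K" for k
    using that someI_ex[OF vinf_in[OF assms, of "h k"]] by (simp add: i_def)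
  have iidx: "i \<in> idx S K" unfolding idx_def using ik by (auto simp: PiE_iff extensional_def i_def)
  have "(\<Prod>k<K. vinf S (h k)) = \<bar>segre S K h i\<bar>"
    using iidx ik by (simp add: segre_def abs_prod)
  also have "\<dots> \<le> tinf S K (segre S K h)"
    unfolding tinf_def using iidx by (intro Max_ge) auto
  finally show ?thesis .
qed

lemma star_vinf_pos:
  assumes "h \<in> params_star S K" "k < K"
  shows "vinf S (h k) > 0"
proof -
  obtain i where "i < S" "h k i \<noteq> 0" using assms unfolding params_star_def by blast
  then show ?thesis using vinf_ge[of i S "h k"] by simp
qed

lemma diag_exists:
  assumes S: "S \<ge> 1" and K: "K \<ge> 1" and h: "h \<in> params_star S K"
  shows "\<exists>h'. h' \<in> params_diag S K \<and> equiv_param K h' h"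
proof -
  define a where "a k = vinf S (h k)" for k
  have apos: "a k > 0" if "k < K" for k using star_vinf_pos[OF h that] by (simp add: a_def)
  define t where "t = (\<Prod>k<K. a k) powr (1 / real K)"
  have Ppos: "(\<Prod>k<K. a k) > 0" using apos by (intro prod_pos) auto
  have tpos: "t > 0" using Ppos unfolding t_def by (metis powr_gt_zero less_irrefl)
  define lam where "lam k = (if k < K then t / a k else 1)" for k
  define h' where "h' k i = lam k * h k i" for k i
  have tK: "t ^ K = (\<Prod>k<K. a k)"
  proof -
    have "t ^ K = t powr real K" using tpos by (simp add: powr_realpow)
    also have "\<dots> = (\<Prod>k<K. a k)" unfolding t_def using K Ppos by (simp add: powr_powr)
    finally show ?thesis .
  qed
  have lprod: "(\<Prod>k<K. lam k) = 1"
  proof -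
    have "(\<Prod>k<K. lam k) = (\<Prod>k<K. t / a k)" by (simp add: lam_def)
    also have "\<dots> = t ^ K / (\<Prod>k<K. a k)" by (simp add: prod_dividef)
    finally show ?thesis using tK Ppos by (metis less_irrefl divide_self)
  qed
  have eq: "equiv_param K h' h" unfolding equiv_param_def using lprod by (auto simp: h'_def)
  have lpos: "lam k > 0" for k using apos tpos by (simp add: lam_def)
  have vh': "vinf S (h' k) = t" if "k < K" for k
  proof -
    have "vinf S (h' k) = \<bar>lam k\<bar> * a k" unfolding h'_def a_def by (rule vinf_scale[OF S])
    then show ?thesis using that apos[OF that] tpos by (simp add: lam_def)
  qed
  have "h' \<in> params S K" using h unfolding params_star_def params_def by (auto simp: h'_def)
  moreover have "\<forall>k<K. \<exists>i<S. h' k i \<noteq> 0"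
  proof (intro allI impI)
    fix k assume "k < K"
    then obtain i where "i < S" "h k i \<noteq> 0" using h unfolding params_star_def by blast
    then show "\<exists>i<S. h' k i \<noteq> 0" using lpos[of k] by (auto simp: h'_def)
  qed
  moreover have "\<forall>k<K. vinf S (h' k) = vinf S (h' 0)" using vh' K by simp
  ultimately have "h' \<in> params_diag S K" unfolding params_diag_def params_star_def by blast
  then show ?thesis using eq by blast
qed


lemma pow_le_powr:
  fixes c M :: real
  assumes "c > 0" "c ^ K \<le> M" "K \<ge> 1"
  shows "c ^ (K - 1) \<le> M powr ((real K - 1) / real K)"
proof -
  have Mpos: "M > 0" using assms by (smt (verit) zero_less_power)
  have "c ^ (K - 1) = c powr (real (K - 1))" using assms by (simp only: powr_realpow)
  also have "\<dots> = (c powr real K) powr ((real K - 1) / real K)"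
    using assms by (simp add: powr_powr of_nat_diff)
  also have "c powr real K = c ^ K" using assms by (simp add: powr_realpow)
  also have "(c ^ K) powr ((real K - 1) / real K) \<le> M powr ((real K - 1) / real K)"
    using assms by (intro powr_mono2) auto
  finally show ?thesis .
qed

lemma pnorm2_sym: "pnorm2 S K (\<lambda>k i. h k i - g k i) = pnorm2 S K (\<lambda>k i. g k i - h k i)"
  unfolding pnorm2_def by (simp add: power2_commute)



lemma diag_bound:
  assumes S: "S \<ge> 1" and K: "K \<ge> 1" and hd: "h' \<in> params_diag S K" and k: "k < K" and s: "s < S"
  shows "\<bar>h' k s\<bar> \<le> vinf S (h' 0)" and "vinf S (h' 0) > 0"
    and "vinf S (h' 0) ^ K \<le> tinf S K (segre S K h')"
proof -
  have v: "vinf S (h' k) = vinf S (h' 0)" if "k < K" for k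
    using hd that unfolding params_diag_def by blast
  show "\<bar>h' k s\<bar> \<le> vinf S (h' 0)" using vinf_ge[OF s, of "h' k"] v[OF k] by simp
  have "h' \<in> params_star S K" using hd unfolding params_diag_def by blast
  then show "vinf S (h' 0) > 0" using K star_vinf_pos by simp
  have "(\<Prod>k<K. vinf S (h' k)) = (\<Prod>k<K. vinf S (h' 0))" by (rule prod.cong) (use v in blast)+
  then have "(\<Prod>k<K. vinf S (h' k)) = vinf S (h' 0) ^ K" by simp
  then show "vinf S (h' 0) ^ K \<le> tinf S K (segre S K h')" using tinf_lower[OF S, where h=h' and K=K] by simp
qed

lemma d2_bound:
  assumes S: "S \<ge> 1" and K: "K \<ge> 1"
    and hb: "hb \<in> params_star S K" and hs: "hs \<in> params_star S K"
  defines "Mx \<equiv> max (tinf S K (segre S K hb)) (tinf S K (segre S K hs))"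
  shows "Mx > 0 \<and> tnorm S K (\<lambda>i. segre S K hb i - segre S K hs i)
     \<le> sqrt (real S) ^ (K - 1) * sqrt (real K) * Mx powr ((real K - 1) / real K) * d2 S K hs hb"
proof -
  obtain g0 where g0: "g0 \<in> params_diag S K" "equiv_param K g0 hb" using diag_exists[OF S K hb] by blast
  obtain h0 where h0: "h0 \<in> params_diag S K" "equiv_param K h0 hs" using diag_exists[OF S K hs] by blast
  have "vinf S (g0 0) ^ K \<le> tinf S K (segre S K hb)"
    using diag_bound(3)[OF S K g0(1), of 0 0] segre_equiv[OF g0(2)] K S by simp
  moreover have "vinf S (g0 0) > 0" using diag_bound(2)[OF S K g0(1), of 0 0] K S by simp
  ultimately have "tinf S K (segre S K hb) > 0" by (metis less_le_trans zero_less_power)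
  then have Mpos: "Mx > 0" unfolding Mx_def by simp
  define Z where "Z = sqrt (real S) ^ (K - 1) * sqrt (real K) * Mx powr ((real K - 1) / real K)"
  have Zpos: "Z > 0" using Mpos S K by (simp add: Z_def)
  let ?D = "{pnorm2 S K (\<lambda>k i. h' k i - g' k i) | h' g'.
      h' \<in> params_diag S K \<and> equiv_param K h' hs \<and>
      g' \<in> params_diag S K \<and> equiv_param K g' hb}"
  have ne: "?D \<noteq> {}" using g0 h0 by blast
  have lb: "tnorm S K (\<lambda>i. segre S K hb i - segre S K hs i) / Z \<le> x" if "x \<in> ?D" for x
  proof -
    obtain h' g' where hg: "x = pnorm2 S K (\<lambda>k i. h' k i - g' k i)"
      "h' \<in> params_diag S K" "equiv_param K h' hs" "g' \<in> params_diag S K" "equiv_param K g' hb"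
      using \<open>x \<in> ?D\<close> by blast
    define a where "a = vinf S (h' 0)"
    define b where "b = vinf S (g' 0)"
    define c where "c = max a b"
    have apos: "a > 0" using diag_bound(2)[OF S K hg(2), of 0 0] K S by (simp add: a_def)
    have bpos: "b > 0" using diag_bound(2)[OF S K hg(4), of 0 0] K S by (simp add: b_def)
    have cpos: "c > 0" using apos by (simp add: c_def)
    have aK: "a ^ K \<le> Mx" using diag_bound(3)[OF S K hg(2), of 0 0] K S segre_equiv[OF hg(3)]
      unfolding Mx_def a_def by simp
    have bK: "b ^ K \<le> Mx" using diag_bound(3)[OF S K hg(4), of 0 0] K S segre_equiv[OF hg(5)]
      unfolding Mx_def b_def by simp
    have cK: "c ^ K \<le> Mx" using aK bK by (simp add: c_def max_def)
    have cpow: "c ^ (K - 1) \<le> Mx powr ((real K - 1) / real K)" by (rule pow_le_powr[OF cpos cK K])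
    have "tnorm S K (\<lambda>i. segre S K hb i - segre S K hs i) = tnorm S K (\<lambda>i. segre S K g' i - segre S K h' i)"
      using segre_equiv[OF hg(3)] segre_equiv[OF hg(5)] by simp
    also have "\<dots> \<le> (sqrt (real S) * c) ^ (K - 1) * sqrt (real K) * pnorm2 S K (\<lambda>k i. g' k i - h' k i)"
    proof (rule segre_diff_bound)
      show "0 \<le> c" using cpos by simp
      show "\<bar>g' k s\<bar> \<le> c" if "k < K" "s < S" for k s
        using diag_bound(1)[OF S K hg(4) that] by (simp add: c_def b_def)
      show "\<bar>h' k s\<bar> \<le> c" if "k < K" "s < S" for k s
        using diag_bound(1)[OF S K hg(2) that] by (simp add: c_def a_def)
    qed
    also have "\<dots> = sqrt (real S) ^ (K - 1) * sqrt (real K) * c ^ (K - 1) * x"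
      using hg(1) pnorm2_sym[of S K h' g'] by (simp add: power_mult_distrib)
    also have "\<dots> \<le> sqrt (real S) ^ (K - 1) * sqrt (real K) * Mx powr ((real K - 1) / real K) * x"
    proof -
      have "x \<ge> 0" using hg(1) by (simp add: pnorm2_def sum_nonneg)
      then show ?thesis using cpow by (intro mult_right_mono mult_left_mono) auto
    qed
    finally show ?thesis using Zpos by (simp add: Z_def pos_divide_le_eq mult.commute)
  qed
  have "tnorm S K (\<lambda>i. segre S K hb i - segre S K hs i) / Z \<le> d2 S K hs hb"
    unfolding d2_def by (rule cInf_greatest[OF ne]) (rule lb)
  then have "tnorm S K (\<lambda>i. segre S K hb i - segre S K hs i) \<le> Z * d2 S K hs hb"
    using Zpos by (simp add: pos_divide_le_eq mult.commute)
  then show ?thesis using Mpos by (simp add: Z_def)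
qed



lemma segre_tensor: "segre S K h \<in> tensors S K"
  by (simp add: segre_def tensors_def)

lemma lin:
  assumes "is_lifting S K m M A" "T \<in> tensors S K" "T' \<in> tensors S K"
  shows "A (\<lambda>i. a * T i + b * T' i) = (\<lambda>r c. a * A T r c + b * A T' r c)"
  using assms unfolding is_lifting_def by blast

lemma A_mats: "is_lifting S K m M A \<Longrightarrow> T \<in> tensors S K \<Longrightarrow> A T \<in> mats (m 0) (m K)"
  unfolding is_lifting_def by blast

lemma A_diff:
  assumes "is_lifting S K m M A" "T \<in> tensors S K" "T' \<in> tensors S K"
  shows "A (\<lambda>i. T i - T' i) = (\<lambda>r c. A T r c - A T' r c)"
  using lin[OF assms, of 1 "-1"] by simp

lemma zero_tensor[simp]: "(\<lambda>_. 0) \<in> tensors S K" by (simp add: tensors_def)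

lemma A_zero:
  assumes "is_lifting S K m M A"
  shows "A (\<lambda>_. 0) = (\<lambda>_ _. 0)"
  using lin[OF assms zero_tensor zero_tensor, of 0 0] by simp

lemma A_scale:
  assumes "is_lifting S K m M A" "T \<in> tensors S K"
  shows "A (\<lambda>i. a * T i) = (\<lambda>r c. a * A T r c)"
  using lin[OF assms assms(2), of a 0] by simp

lemma A_sum:
  assumes L: "is_lifting S K m M A" and "finite J" and f: "\<And>j. j \<in> J \<Longrightarrow> f j \<in> tensors S K"
  shows "A (\<lambda>i. \<Sum>j\<in>J. f j i) = (\<lambda>r c. \<Sum>j\<in>J. A (f j) r c)"
  using assms(2,3)
proof (induction J rule: finite_induct)
  case empty
  then show ?case using A_zero[OF L] by simp
next
  case (insert x F)
  have tF: "(\<lambda>i. \<Sum>j\<in>F. f j i) \<in> tensors S K"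
    using insert.prems by (auto simp: tensors_def)
  have "A (\<lambda>i. \<Sum>j\<in>insert x F. f j i) = A (\<lambda>i. 1 * f x i + 1 * (\<Sum>j\<in>F. f j i))"
    using insert by simp
  also have "\<dots> = (\<lambda>r c. 1 * A (f x) r c + 1 * A (\<lambda>i. \<Sum>j\<in>F. f j i) r c)"
    by (rule lin[OF L _ tF]) (use insert.prems in auto)
  finally show ?case using insert by simp
qed

lemma fro_le_abs: "fro a b X \<le> (\<Sum>r<a. \<Sum>c<b. \<bar>X r c\<bar>)"
proof -
  have "fro a b X = L2_set (\<lambda>p. X (fst p) (snd p)) ({..<a} \<times> {..<b})"
    unfolding fro_def L2_set_def by (simp add: sum.cartesian_product case_prod_beta)
  also have "\<dots> \<le> (\<Sum>p\<in>{..<a} \<times> {..<b}. \<bar>X (fst p) (snd p)\<bar>)" by (rule L2_set_le_sum_abs)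
  also have "\<dots> = (\<Sum>r<a. \<Sum>c<b. \<bar>X r c\<bar>)" by (simp add: sum.cartesian_product case_prod_beta)
  finally show ?thesis .
qed

lemma entry_le_tnorm: "j \<in> idx S K \<Longrightarrow> \<bar>T j\<bar> \<le> tnorm S K T"
proof -
  assume j: "j \<in> idx S K"
  have "(T j)\<^sup>2 \<le> (\<Sum>i\<in>idx S K. (T i)\<^sup>2)" using j by (intro member_le_sum) auto
  then have "sqrt ((T j)\<^sup>2) \<le> sqrt (\<Sum>i\<in>idx S K. (T i)\<^sup>2)" by (rule real_sqrt_le_mono)
  then show ?thesis by (simp add: tnorm_def)
qed

lemma A_bounded:
  assumes L: "is_lifting S K m M A"
  shows "\<exists>B. \<forall>T\<in>tensors S K. fro (m 0) (m K) (A T) \<le> B * tnorm S K T"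
proof -
  define E where "E j = (\<lambda>i. if i = j then (1::real) else 0)" for j :: "nat \<Rightarrow> nat"
  have Et: "E j \<in> tensors S K" if "j \<in> idx S K" for j using that by (auto simp: E_def tensors_def)
  define B where "B = (\<Sum>r<m 0. \<Sum>c<m K. \<Sum>j\<in>idx S K. \<bar>A (E j) r c\<bar>)"
  have "fro (m 0) (m K) (A T) \<le> B * tnorm S K T" if T: "T \<in> tensors S K" for T
  proof -
    have Tdec: "T = (\<lambda>i. \<Sum>j\<in>idx S K. T j * E j i)"
    proof
      fix i
      show "T i = (\<Sum>j\<in>idx S K. T j * E j i)"
      proof (cases "i \<in> idx S K")
        case True
        have "(\<Sum>j\<in>idx S K. T j * E j i) = (\<Sum>j\<in>idx S K. if j = i then T j else 0)"
          by (rule sum.cong) (auto simp: E_def)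
        then show ?thesis using True by simp
      next
        case False
        then have "T i = 0" using T by (simp add: tensors_def)
        moreover have "(\<Sum>j\<in>idx S K. T j * E j i) = 0" using False by (auto simp: E_def intro!: sum.neutral)
        ultimately show ?thesis by simp
      qed
    qed
    have AT: "A T = (\<lambda>r c. \<Sum>j\<in>idx S K. A (\<lambda>i. T j * E j i) r c)"
      by (subst Tdec, rule A_sum[OF L]) (auto simp: tensors_def E_def)
    have AT2: "A T r c = (\<Sum>j\<in>idx S K. T j * A (E j) r c)" for r c
      unfolding AT using A_scale[OF L Et] by simp
    have "fro (m 0) (m K) (A T) \<le> (\<Sum>r<m 0. \<Sum>c<m K. \<bar>A T r c\<bar>)" by (rule fro_le_abs)
    also have "\<dots> \<le> (\<Sum>r<m 0. \<Sum>c<m K. tnorm S K T * (\<Sum>j\<in>idx S K. \<bar>A (E j) r c\<bar>))"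
    proof (intro sum_mono)
      fix r c
      have "\<bar>A T r c\<bar> \<le> (\<Sum>j\<in>idx S K. \<bar>T j * A (E j) r c\<bar>)" unfolding AT2 by (rule sum_abs)
      also have "\<dots> \<le> (\<Sum>j\<in>idx S K. tnorm S K T * \<bar>A (E j) r c\<bar>)"
        by (intro sum_mono) (auto simp: abs_mult intro: mult_right_mono entry_le_tnorm)
      finally show "\<bar>A T r c\<bar> \<le> tnorm S K T * (\<Sum>j\<in>idx S K. \<bar>A (E j) r c\<bar>)"
        by (simp add: sum_distrib_left)
    qed
    also have "\<dots> = B * tnorm S K T" by (simp add: B_def sum_distrib_left mult.commute)
    finally show ?thesis .
  qed
  then show ?thesis by blast
qed

lemma fro_scale: "fro a b (\<lambda>r c. l * X r c) = \<bar>l\<bar> * fro a b X"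
proof -
  have "(\<Sum>r<a. \<Sum>c<b. (l * X r c)\<^sup>2) = l\<^sup>2 * (\<Sum>r<a. \<Sum>c<b. (X r c)\<^sup>2)"
    by (simp add: power_mult_distrib sum_distrib_left)
  then show ?thesis by (simp add: fro_def real_sqrt_mult)
qed

lemma tnorm_nonneg: "tnorm S K T \<ge> 0" by (simp add: tnorm_def sum_nonneg)

lemma sigma_bound:
  assumes L: "is_lifting S K m M A" and U: "U \<in> tensors S K"
  shows "fro (m 0) (m K) (A U) \<le> sigma_max S K m A * tnorm S K U"
proof -
  obtain B where B: "\<forall>T\<in>tensors S K. fro (m 0) (m K) (A T) \<le> B * tnorm S K T"
    using A_bounded[OF L] by blast
  let ?X = "{fro (m 0) (m K) (A T) | T. T \<in> tensors S K \<and> tnorm S K T \<le> 1}"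
  have bdd: "bdd_above ?X"
  proof (rule bdd_aboveI)
    fix x assume "x \<in> ?X"
    then obtain T where T: "x = fro (m 0) (m K) (A T)" "T \<in> tensors S K" "tnorm S K T \<le> 1" by blast
    have "x \<le> B * tnorm S K T" using B T by blast
    also have "\<dots> \<le> \<bar>B\<bar> * tnorm S K T" by (intro mult_right_mono) (auto simp: tnorm_nonneg)
    also have "\<dots> \<le> \<bar>B\<bar>" using T(3) by (simp add: mult_left_le tnorm_nonneg)
    finally show "x \<le> \<bar>B\<bar>" .
  qed
  show ?thesis
  proof (cases "tnorm S K U = 0")
    case True
    then have "\<forall>i\<in>idx S K. U i = 0" unfolding tnorm_L2 by (simp add: L2_set_eq_0_iff)
    then have "U = (\<lambda>_. 0)" using U by (auto simp: tensors_def)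
    then show ?thesis using A_zero[OF L] True by (simp add: fro_def)
  next
    case False
    define t where "t = tnorm S K U"
    have tpos: "t > 0" using False tnorm_nonneg[of S K U] by (simp add: t_def)
    define V where "V = (\<lambda>i. (1 / t) * U i)"
    have Vt: "V \<in> tensors S K" using U by (simp add: V_def tensors_def)
    have "tnorm S K V = (1 / t) * tnorm S K U"
      unfolding V_def tnorm_L2 using tpos by (subst L2_set_right_distrib[symmetric]) auto
    then have "tnorm S K V \<le> 1" using tpos by (simp add: t_def)
    then have "fro (m 0) (m K) (A V) \<le> sigma_max S K m A"
      unfolding sigma_max_def using Vt by (intro cSup_upper[OF _ bdd]) blast
    moreover have "fro (m 0) (m K) (A V) = (1 / t) * fro (m 0) (m K) (A U)"
      unfolding V_def A_scale[OF L U] fro_scale using tpos by simp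
    ultimately have "fro (m 0) (m K) (A U) / t \<le> sigma_max S K m A" by simp
    then show ?thesis using tpos by (simp add: t_def pos_divide_le_eq)
  qed
qed



definition scale0 :: "real \<Rightarrow> param \<Rightarrow> param" where
  "scale0 c h = (\<lambda>k i. if k = 0 then c * h k i else h k i)"

lemma segre_scale0:
  assumes K: "K \<ge> 1"
  shows "segre S K (scale0 c h) = (\<lambda>i. c * segre S K h i)"
proof
  fix i
  have "(\<Prod>k<K. scale0 c h k (i k)) = (\<Prod>k<K. (if k = 0 then c else 1) * h k (i k))"
    by (rule prod.cong) (auto simp: scale0_def)
  also have "\<dots> = (\<Prod>k<K. (if k = 0 then c else 1)) * (\<Prod>k<K. h k (i k))" by (rule prod.distrib)
  also have "(\<Prod>k<K. (if k = 0 then c else 1)) = c" using K by (simp add: prod.delta)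
  finally show "segre S K (scale0 c h) i = c * segre S K h i" by (simp add: segre_def)
qed

lemma scale0_params_S: "h \<in> params_S S K Sp \<Longrightarrow> scale0 c h \<in> params_S S K Sp"
  by (auto simp: params_S_def params_def scale0_def)

lemma scale0_star: "h \<in> params_star S K \<Longrightarrow> c \<noteq> 0 \<Longrightarrow> scale0 c h \<in> params_star S K"
  by (auto simp: params_star_def params_def scale0_def)

lemma segre_nonstar:
  assumes "h \<in> params S K" "h \<notin> params_star S K"
  shows "segre S K h = (\<lambda>_. 0)"
proof
  fix i
  obtain k where k: "k < K" "\<forall>s<S. h k s = 0" using assms unfolding params_star_def by auto
  show "segre S K h i = 0"
  proof (cases "i \<in> idx S K")
    case True
    then have "i k < S" using k unfolding idx_def by auto
    then have "h k (i k) = 0" using k by simp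
    then show ?thesis using True k by (auto simp: segre_def intro!: prod_zero bexI[where x=k])
  qed (simp add: segre_def)
qed

lemma keyL:
  assumes S: "S \<ge> 1" and K: "K \<ge> 1"
    and hb: "hb \<in> params_star S K" and hs: "hs \<in> params_star S K"
    and C: "C > 0" and f: "f \<ge> 0"
    and d: "d2 S K hs hb \<le> C * min (tinf S K (segre S K hb) powr (1 / real K - 1))
                       (tinf S K (segre S K hs) powr (1 / real K - 1)) * f"
  shows "tnorm S K (\<lambda>i. segre S K hb i - segre S K hs i) \<le> C * sqrt (real S) ^ (K - 1) * sqrt (real K) * f"
proof -
  define Mx where "Mx = max (tinf S K (segre S K hb)) (tinf S K (segre S K hs))"
  define q where "q = (real K - 1) / real K"
  define p where "p = 1 / real K - 1"
  define W where "W = sqrt (real S) ^ (K - 1) * sqrt (real K)"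
  have W: "W \<ge> 0" by (simp add: W_def)
  from d2_bound[OF S K hb hs] have Mpos: "Mx > 0"
    and tb: "tnorm S K (\<lambda>i. segre S K hb i - segre S K hs i) \<le> W * Mx powr q * d2 S K hs hb"
    by (simp_all add: Mx_def q_def W_def)
  have minle: "min (tinf S K (segre S K hb) powr p) (tinf S K (segre S K hs) powr p) \<le> Mx powr p"
    by (simp add: Mx_def max_def)
  have qp: "Mx powr q * Mx powr p = 1"
  proof -
    have "q + p = 0" using K by (simp add: q_def p_def field_simps)
    then show ?thesis using Mpos by (simp add: powr_add[symmetric])
  qed
  have "tnorm S K (\<lambda>i. segre S K hb i - segre S K hs i) \<le> W * Mx powr q * d2 S K hs hb" by (rule tb)
  also have "\<dots> \<le> W * Mx powr q * (C * Mx powr p * f)"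
  proof (rule mult_left_mono)
    have "C * min (tinf S K (segre S K hb) powr p) (tinf S K (segre S K hs) powr p) * f \<le> C * Mx powr p * f"
      using minle C f by (intro mult_right_mono mult_left_mono) auto
    then show "d2 S K hs hb \<le> C * Mx powr p * f" using d by (simp add: p_def)
    show "0 \<le> W * Mx powr q" using W by simp
  qed
  also have "\<dots> = W * C * f * (Mx powr q * Mx powr p)" by (simp add: algebra_simps)
  also have "\<dots> = C * sqrt (real S) ^ (K - 1) * sqrt (real K) * f" using qp by (simp add: W_def algebra_simps)
  finally show ?thesis .
qed



lemma params_S_params: "h \<in> params_S S K Sp \<Longrightarrow> h \<in> params S K"
  by (simp add: params_S_def)

theorem theorem4:
  fixes S K :: nat and m :: "nat \<Rightarrow> nat" and M :: "nat \<Rightarrow> vec \<Rightarrow> mat"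
    and A :: "tensor \<Rightarrow> mat" and MM :: "support set" and C \<delta> :: real
  assumes "K \<ge> 1" and "S \<ge> 1"
    and "\<forall>k\<le>K. m k > 0"
    and "linear_factors S K m M"
    and "is_lifting S K m M A"
    and "finite MM"
    and "\<forall>Sp\<in>MM. \<forall>k<K. Sp k \<subseteq> {..<S}"
    and "C > 0" and "\<delta> > 0"
    and stable: "\<forall>Sp\<in>MM. \<forall>hb\<in>params_S S K Sp. \<forall>e\<in>mats (m 0) (m K).
        fro (m 0) (m K) e \<le> \<delta> \<longrightarrow>
        (\<forall>Sps\<in>MM. \<forall>hs\<in>params_S S K Sps.
           hb \<in> params_star S K \<and> hs \<in> params_star S K \<and>
           fro (m 0) (m K) (msub (A (segre S K hs)) (madd (A (segre S K hb)) e))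
             \<le> fro (m 0) (m K) e
           \<longrightarrow> d2 S K hs hb \<le>
               C * min (tinf S K (segre S K hb) powr (1 / real K - 1))
                       (tinf S K (segre S K hs) powr (1 / real K - 1))
                 * fro (m 0) (m K) e)"
  shows "deep_NSP S K m A MM
           (C * real S powr ((real K - 1) / 2) * sqrt (real K) * sigma_max S K m A) \<delta>"
proof -
  have K: "K \<ge> 1" and S: "S \<ge> 1" and L: "is_lifting S K m M A" and C: "C > 0"
    using assms by auto
  define G where "G = C * sqrt (real S) ^ (K - 1) * sqrt (real K)"
  have G: "G \<ge> 0" using C by (simp add: G_def)
  have pw: "real S powr ((real K - 1) / 2) = sqrt (real S) ^ (K - 1)"
  proof -
    have "sqrt (real S) ^ (K - 1) = sqrt (real S) powr real (K - 1)" using S by (simp add: powr_realpow)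
    also have "\<dots> = (real S powr (1/2)) powr real (K - 1)" using S by (simp add: powr_half_sqrt)
    also have "\<dots> = real S powr ((real K - 1) / 2)" using K by (simp add: powr_powr of_nat_diff)
    finally show ?thesis by simp
  qed
  have H: "tnorm S K (\<lambda>i. segre S K hb i - segre S K hs i)
             \<le> G * fro (m 0) (m K) (A (\<lambda>i. segre S K hb i - segre S K hs i))"
    if Sp1: "Sp1 \<in> MM" and Sp2: "Sp2 \<in> MM" and hb: "hb \<in> params_S S K Sp1" "hb \<in> params_star S K"
      and hs: "hs \<in> params_S S K Sp2" "hs \<in> params_star S K"
      and small: "fro (m 0) (m K) (A (\<lambda>i. segre S K hb i - segre S K hs i)) \<le> \<delta>"
    for Sp1 Sp2 hb hs
  proof -
    let ?T = "\<lambda>i. segre S K hb i - segre S K hs i"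
    have AT: "A ?T = (\<lambda>r c. A (segre S K hb) r c - A (segre S K hs) r c)"
      by (rule A_diff[OF L segre_tensor segre_tensor])
    have Tt: "?T \<in> tensors S K" by (simp add: tensors_def segre_def)
    define e where "e = (\<lambda>r c. - A ?T r c)"
    have fe: "fro (m 0) (m K) e = fro (m 0) (m K) (A ?T)"
      using fro_scale[of "m 0" "m K" "-1" "A ?T"] by (simp add: e_def)
    have em: "e \<in> mats (m 0) (m K)" using A_mats[OF L Tt] by (simp add: e_def mats_def)
    have "msub (A (segre S K hs)) (madd (A (segre S K hb)) e) = (\<lambda>_ _. 0)"
      by (simp add: msub_def madd_def e_def AT)
    then have "fro (m 0) (m K) (msub (A (segre S K hs)) (madd (A (segre S K hb)) e)) \<le> fro (m 0) (m K) e"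
      by (simp add: fro_def sum_nonneg)
    then have "d2 S K hs hb \<le> C * min (tinf S K (segre S K hb) powr (1 / real K - 1))
                       (tinf S K (segre S K hs) powr (1 / real K - 1)) * fro (m 0) (m K) e"
    proof -
      have fed: "fro (m 0) (m K) e \<le> \<delta>" using small fe by simp
      show ?thesis
        by (rule stable[rule_format, OF Sp1 hb(1) em fed Sp2 hs(1)]) (use hb hs \<open>fro (m 0) (m K) (msub _ _) \<le> _\<close> in blast)
    qed
    then show ?thesis unfolding G_def fe
      by (intro keyL[OF S K hb(2) hs(2) C]) (auto simp: fro_def sum_nonneg)
  qed
  show ?thesis unfolding deep_NSP_def
  proof (intro ballI allI impI, elim conjE)
    fix Sp Sp' T T'
    assume Sp: "Sp \<in> MM" and Sp': "Sp' \<in> MM" and Ts: "T \<in> segre_sum S K Sp Sp'"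
      and small: "fro (m 0) (m K) (A (proj S K (sunion Sp Sp') T)) \<le> \<delta>"
      and T't: "T' \<in> tensors S K" and ker: "A (proj S K (sunion Sp Sp') T') = (\<lambda>_ _. 0)"
    obtain h g where T: "T = (\<lambda>i. segre S K h i + segre S K g i)"
      and h: "h \<in> params_S S K Sp" and g: "g \<in> params_S S K Sp'"
      using Ts unfolding segre_sum_def by blast
    have projT: "proj S K (sunion Sp Sp') T = T"
    proof
      fix i
      show "proj S K (sunion Sp Sp') T i = T i"
      proof (cases "in_supp K i (sunion Sp Sp')")
        case False
        then obtain k where k: "k < K" "i k \<notin> Sp k" "i k \<notin> Sp' k"
          by (auto simp: in_supp_def sunion_def)
        then have "h k (i k) = 0" "g k (i k) = 0" using h g by (auto simp: params_S_def)
        then have "segre S K h i = 0" "segre S K g i = 0" using k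
          by (auto simp: segre_def intro!: prod_zero bexI[where x=k])
        then show ?thesis using False by (simp add: proj_def T)
      qed (simp add: proj_def)
    qed
    have Tt: "T \<in> tensors S K" by (simp add: T tensors_def segre_def)
    have fAT: "fro (m 0) (m K) (A T) \<le> \<delta>" using small projT by simp
    have core: "tnorm S K T \<le> G * fro (m 0) (m K) (A T)"
    proof (cases "h \<in> params_star S K")
      case hst: True
      show ?thesis
      proof (cases "g \<in> params_star S K")
        case True
        let ?hs = "scale0 (-1) g"
        have eq: "T = (\<lambda>i. segre S K h i - segre S K ?hs i)" using K by (simp add: T segre_scale0)
        show ?thesis unfolding eq
          by (rule H[OF Sp Sp' h hst scale0_params_S[OF g] scale0_star[OF True]]) (use fAT eq in auto)
      next
        case False
        have g0: "segre S K g = (\<lambda>_. 0)" by (rule segre_nonstar[OF params_S_params[OF g] False])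
        have eq: "T = (\<lambda>i. segre S K (scale0 (1/2) h) i - segre S K (scale0 (-1/2) h) i)"
          using K by (simp add: T g0 segre_scale0)
        show ?thesis unfolding eq
          by (rule H[OF Sp Sp scale0_params_S[OF h] scale0_star[OF hst] scale0_params_S[OF h] scale0_star[OF hst]])
            (use fAT eq in auto)
      qed
    next
      case hn: False
      have h0: "segre S K h = (\<lambda>_. 0)" by (rule segre_nonstar[OF params_S_params[OF h] hn])
      show ?thesis
      proof (cases "g \<in> params_star S K")
        case True
        have eq: "T = (\<lambda>i. segre S K (scale0 (1/2) g) i - segre S K (scale0 (-1/2) g) i)"
          using K by (simp add: T h0 segre_scale0)
        show ?thesis unfolding eq
          by (rule H[OF Sp' Sp' scale0_params_S[OF g] scale0_star[OF True] scale0_params_S[OF g] scale0_star[OF True]])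
            (use fAT eq in auto)
      next
        case False
        have g0: "segre S K g = (\<lambda>_. 0)" by (rule segre_nonstar[OF params_S_params[OF g] False])
        have "T = (\<lambda>_. 0)" by (simp add: T h0 g0)
        then show ?thesis using G by (simp add: tnorm_def fro_def sum_nonneg)
      qed
    qed
    have pT't: "proj S K (sunion Sp Sp') T' \<in> tensors S K"
      using T't by (auto simp: tensors_def proj_def)
    have Dt: "(\<lambda>i. T i - proj S K (sunion Sp Sp') T' i) \<in> tensors S K"
      using Tt pT't by (auto simp: tensors_def)
    have "A (\<lambda>i. T i - proj S K (sunion Sp Sp') T' i) = A T"
      using A_diff[OF L Tt pT't] ker by simp
    then have "fro (m 0) (m K) (A T)
        \<le> sigma_max S K m A * tnorm S K (\<lambda>i. T i - proj S K (sunion Sp Sp') T' i)"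
      using sigma_bound[OF L Dt] by simp
    then have "tnorm S K T \<le> G * (sigma_max S K m A * tnorm S K (\<lambda>i. T i - proj S K (sunion Sp Sp') T' i))"
      using core G by (meson mult_left_mono order_trans)
    then show "tnorm S K T \<le> C * real S powr ((real K - 1) / 2) * sqrt (real K) * sigma_max S K m A *
          tnorm S K (\<lambda>i. T i - proj S K (sunion Sp Sp') T' i)"
      by (simp add: pw G_def mult.assoc)
  qed
qed

end
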